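(* Let $\mathbb T$ be a finitary monad corresponding to an algebraic theory over a signature $\Sigma$, and let $B$ be a $\mathbb T$-algebra finitely generated by a finite set $B_0$. For every reactive expression $e\in\mathrm{Exp}_\Sigma(B_0)$ there exist a $\mathbb T$-automaton $m$ (with output algebra $B$ and finite state set $X$) and a state $x\in X$ with $\llbracket e\rrbracket=\llbracket x\rrbracket_m$; conversely, for every such $\mathbb T$-automaton $m$ and every state $x\in X$ there is a reactive expression $e\in\mathrm{Exp}_\Sigma(B_0)$ with $\llbracket e\rrbracket=\llbracket x\rrbracket_m$.
   Context: Fix a finite set of actions $A=\{a_1,\dots,a_n\}$; $LX=B\times X^A$; $L$-coalgebras $(X,o,\partial_a)$ with $\partial_\epsilon(x)=x$, $\partial_{aw}(x)=\partial_w(\partial_a(x))$; $B^{A^*}$ is the final $L$-coalgebra ($o(\sigma)=\sigma(\epsilon)$, $\partial_a\sigma=\lambda w.\sigma(aw)$) and $\llbracket-\rrbracket$ denotes the unique coalgebra morphism into it. $TX$ is the set of $\Sigma$-terms over $X$ modulo the theory; "finitely generated by $B_0$" means there is a surjective $\mathbb T$-algebra morphism $TB_0\to B$. A $\mathbb T$-automaton consists of a finite set $X$, the algebra $a^m:TB\to B$, and maps $o^m:X\to B$, $t^m:A\times X\to TX$; its trace semantics is $\llbracket x\rrbracket_m=\llbracket\eta_X(x)\rrbracket_{TX}$, where $TX$ carries the $L$-coalgebra structure $m^\sharp:TX\to B\times(TX)^A$, the unique $\mathbb T$-algebra morphism (for the componentwise algebra structure built from $a^m$ and the free structure on $TX$)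 with $m^\sharp(\eta_X(x))=(o^m(x),\lambda a.\,t^m(a,x))$. Reactive expressions are the closed terms $\delta$ of the grammar $\delta::=x\mid\gamma\mid f(\delta,\dots,\delta)$ ($f\in\Sigma$), $\gamma::=\mu x.\,(a_1.\delta\pitchfork\cdots\pitchfork a_n.\delta\pitchfork\beta)$, $\beta::=b\mid f(\beta,\dots,\beta)$ ($b\in B_0$); their set $\mathrm{Exp}_\Sigma(B_0)$ is an $L$-coalgebra via $o(f(e_1,\dots,e_k))=f^B(o(e_1),\dots,o(e_k))$, $\partial_a(f(e_1,\dots,e_k))=f(\partial_a e_1,\dots,\partial_a e_k)$, $o(\mu x.(a_1.e_1\pitchfork\cdots\pitchfork a_n.e_n\pitchfork\beta))=$ the value of $\beta$ in $B$, $\partial_{a_i}(\mu x.(a_1.e_1\pitchfork\cdots\pitchfork a_n.e_n\pitchfork\beta))=e_i[\mu x.(a_1.e_1\pitchfork\cdots\pitchfork a_n.e_n\pitchfork\beta)/x]$, and $\llbracket e\rrbracket$ is the trace semantics of $e$ in this coalgebra. *)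

theory Defs
  imports Main
begin

text \<open>A signature is a type of function symbols 'f with an arity map ar (finite arities,
  so the induced monad is finitary). Sigma-terms over variables 'v:\<close>

datatype ('f,'v) trm = Var 'v | App 'f "('f,'v) trm list"

fun wf_trm :: "('f \<Rightarrow> nat) \<Rightarrow> ('f,'v) trm \<Rightarrow> bool" where
  "wf_trm ar (Var x) = True"
| "wf_trm ar (App f ts) = (length ts = ar f \<and> (\<forall>t\<in>set ts. wf_trm ar t))"

fun vars_trm :: "('f,'v) trm \<Rightarrow> 'v set" where
  "vars_trm (Var x) = {x}"
| "vars_trm (App f ts) = (\<Union>t\<in>set ts. vars_trm t)"

fun eval_trm :: "('f \<Rightarrow> 'b list \<Rightarrow> 'b) \<Rightarrow> ('v \<Rightarrow> 'b) \<Rightarrow> ('f,'v) trm \<Rightarrow> 'b" where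
  "eval_trm I \<rho> (Var x) = \<rho> x"
| "eval_trm I \<rho> (App f ts) = I f (map (eval_trm I \<rho>) ts)"

fun subst_trm :: "('v \<Rightarrow> ('f,'w) trm) \<Rightarrow> ('f,'v) trm \<Rightarrow> ('f,'w) trm" where
  "subst_trm \<sigma> (Var x) = \<sigma> x"
| "subst_trm \<sigma> (App f ts) = App f (map (subst_trm \<sigma>) ts)"

definition eq_theory :: "('f \<Rightarrow> nat) \<Rightarrow> ('f,nat) trm rel \<Rightarrow> bool" where
  "eq_theory ar E \<longleftrightarrow> (\<forall>(l,r)\<in>E. wf_trm ar l \<and> wf_trm ar r)"

inductive eqv :: "('f \<Rightarrow> nat) \<Rightarrow> ('f,nat) trm rel \<Rightarrow> ('f,'v) trm \<Rightarrow> ('f,'v) trm \<Rightarrow> bool"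
  for ar E where
  eqv_refl: "eqv ar E t t"
| eqv_sym: "eqv ar E s t \<Longrightarrow> eqv ar E t s"
| eqv_trans: "eqv ar E s t \<Longrightarrow> eqv ar E t u \<Longrightarrow> eqv ar E s u"
| eqv_cong: "length ss = length ts \<Longrightarrow> (\<forall>i<length ts. eqv ar E (ss ! i) (ts ! i))
              \<Longrightarrow> eqv ar E (App f ss) (App f ts)"
| eqv_inst: "(l,r) \<in> E \<Longrightarrow> (\<forall>v. wf_trm ar (\<sigma> v))
              \<Longrightarrow> eqv ar E (subst_trm \<sigma> l) (subst_trm \<sigma> r)"

definition is_T_algebra :: "('f,nat) trm rel \<Rightarrow> ('f \<Rightarrow> 'b list \<Rightarrow> 'b) \<Rightarrow> bool" where
  "is_T_algebra E I \<longleftrightarrow> (\<forall>(l,r)\<in>E. \<forall>\<rho>. eval_trm I \<rho> l = eval_trm I \<rho> r)"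

text \<open>B finitely generated by B0: B0 finite and the T-algebra morphism TB0 \<rightarrow> B extending
  the inclusion (i.e. evaluation of terms over B0) is surjective.\<close>

definition fin_generated :: "('f \<Rightarrow> nat) \<Rightarrow> ('f \<Rightarrow> 'b list \<Rightarrow> 'b) \<Rightarrow> 'b set \<Rightarrow> bool" where
  "fin_generated ar I B0 \<longleftrightarrow> finite B0 \<and>
     (\<forall>b. \<exists>t. wf_trm ar t \<and> vars_trm t \<subseteq> B0 \<and> eval_trm I id t = b)"

text \<open>For an L-coalgebra (o, d), the unique morphism into B^(A*) maps x to w \<mapsto> o(d_w x),
  with d_eps x = x and d_(aw) x = d_w (d_a x).\<close>

definition trace :: "('c \<Rightarrow> 'b) \<Rightarrow> ('a \<Rightarrow> 'c \<Rightarrow> 'c) \<Rightarrow> 'c \<Rightarrow> 'a list \<Rightarrow> 'b" where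
  "trace out der x = (\<lambda>w. out (foldl (\<lambda>c a. der a c) x w))"

text \<open>The equivalence class of a term in TX (terms over X modulo the theory).\<close>

definition tclass :: "('f \<Rightarrow> nat) \<Rightarrow> ('f,nat) trm rel \<Rightarrow> 'x set \<Rightarrow> ('f,'x) trm \<Rightarrow> ('f,'x) trm set" where
  "tclass ar E X t = {s. wf_trm ar s \<and> vars_trm s \<subseteq> X \<and> eqv ar E t s}"

definition TSet :: "('f \<Rightarrow> nat) \<Rightarrow> ('f,nat) trm rel \<Rightarrow> 'x set \<Rightarrow> ('f,'x) trm set set" where
  "TSet ar E X = {tclass ar E X t | t. wf_trm ar t \<and> vars_trm t \<subseteq> X}"

definition rep :: "('f,'x) trm set \<Rightarrow> ('f,'x) trm" where
  "rep c = (SOME t. t \<in> c)"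

text \<open>A T-automaton with output algebra B (given by I): finite state set X,
  output map om : X \<Rightarrow> B, transitions tm : A \<times> X \<Rightarrow> TX.\<close>

definition is_T_automaton :: "('f \<Rightarrow> nat) \<Rightarrow> ('f,nat) trm rel \<Rightarrow> 'x set
     \<Rightarrow> ('a \<Rightarrow> 'x \<Rightarrow> ('f,'x) trm set) \<Rightarrow> bool" where
  "is_T_automaton ar E X tm \<longleftrightarrow> finite X \<and> (\<forall>a. \<forall>x\<in>X. tm a x \<in> TSet ar E X)"

text \<open>The L-coalgebra structure m# on TX: the T-algebra morphism extending
  eta(x) \<mapsto> (om x, \<lambda>a. tm a x); computed on representatives.\<close>

definition aut_out :: "('f \<Rightarrow> 'b list \<Rightarrow> 'b) \<Rightarrow> ('x \<Rightarrow> 'b) \<Rightarrow> ('f,'x) trm set \<Rightarrow> 'b" where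
  "aut_out I om c = eval_trm I om (rep c)"

definition aut_der :: "('f \<Rightarrow> nat) \<Rightarrow> ('f,nat) trm rel \<Rightarrow> 'x set
     \<Rightarrow> ('a \<Rightarrow> 'x \<Rightarrow> ('f,'x) trm set) \<Rightarrow> 'a \<Rightarrow> ('f,'x) trm set \<Rightarrow> ('f,'x) trm set" where
  "aut_der ar E X tm a c = tclass ar E X (subst_trm (\<lambda>x. rep (tm a x)) (rep c))"

definition aut_sem :: "('f \<Rightarrow> nat) \<Rightarrow> ('f,nat) trm rel \<Rightarrow> ('f \<Rightarrow> 'b list \<Rightarrow> 'b) \<Rightarrow> 'x set
     \<Rightarrow> ('x \<Rightarrow> 'b) \<Rightarrow> ('a \<Rightarrow> 'x \<Rightarrow> ('f,'x) trm set) \<Rightarrow> 'x \<Rightarrow> 'a list \<Rightarrow> 'b" where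
  "aut_sem ar E I X om tm x = trace (aut_out I om) (aut_der ar E X tm) (tclass ar E X (Var x))"

text \<open>RMu x br beta stands for  mu x. (a1.br(a1) \<pitchfork> ... \<pitchfork> an.br(an) \<pitchfork> beta).\<close>

datatype ('f,'a,'b) rexp =
    RVar nat
  | RMu nat "'a \<Rightarrow> ('f,'a,'b) rexp" "('f,'b) trm"
  | RApp 'f "('f,'a,'b) rexp list"

primrec fv_rexp :: "('f,'a,'b) rexp \<Rightarrow> nat set" where
  "fv_rexp (RVar x) = {x}"
| "fv_rexp (RMu x br \<beta>) = (\<Union> (range (\<lambda>a. fv_rexp (br a)))) - {x}"
| "fv_rexp (RApp f es) = \<Union> (set (map fv_rexp es))"

primrec wf_rexp :: "('f \<Rightarrow> nat) \<Rightarrow> 'b set \<Rightarrow> ('f,'a,'b) rexp \<Rightarrow> bool" where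
  "wf_rexp ar B0 (RVar x) = True"
| "wf_rexp ar B0 (RMu x br \<beta>) =
     ((\<forall>a. wf_rexp ar B0 (br a)) \<and> wf_trm ar \<beta> \<and> vars_trm \<beta> \<subseteq> B0)"
| "wf_rexp ar B0 (RApp f es) = (length es = ar f \<and> list_all id (map (wf_rexp ar B0) es))"

definition reactive :: "('f \<Rightarrow> nat) \<Rightarrow> 'b set \<Rightarrow> ('f,'a,'b) rexp \<Rightarrow> bool" where
  "reactive ar B0 e \<longleftrightarrow> fv_rexp e = {} \<and> wf_rexp ar B0 e"

text \<open>Substitution of a (closed) expression g for the free variable x.\<close>

primrec subst_rexp :: "nat \<Rightarrow> ('f,'a,'b) rexp \<Rightarrow> ('f,'a,'b) rexp \<Rightarrow> ('f,'a,'b) rexp" where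
  "subst_rexp x g (RVar y) = (if y = x then g else RVar y)"
| "subst_rexp x g (RMu y br \<beta>) =
     (if y = x then RMu y br \<beta> else RMu y (\<lambda>a. subst_rexp x g (br a)) \<beta>)"
| "subst_rexp x g (RApp f es) = RApp f (map (subst_rexp x g) es)"

primrec rexp_out :: "('f \<Rightarrow> 'b list \<Rightarrow> 'b) \<Rightarrow> ('f,'a,'b) rexp \<Rightarrow> 'b" where
  "rexp_out I (RVar x) = undefined"
| "rexp_out I (RMu x br \<beta>) = eval_trm I id \<beta>"
| "rexp_out I (RApp f es) = I f (map (rexp_out I) es)"

primrec rexp_der :: "'a \<Rightarrow> ('f,'a,'b) rexp \<Rightarrow> ('f,'a,'b) rexp" where
  "rexp_der a (RVar x) = RVar x"
| "rexp_der a (RMu x br \<beta>) = subst_rexp x (RMu x br \<beta>) (br a)"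
| "rexp_der a (RApp f es) = RApp f (map (rexp_der a) es)"

definition rexp_sem :: "('f \<Rightarrow> 'b list \<Rightarrow> 'b) \<Rightarrow> ('f,'a,'b) rexp \<Rightarrow> 'a list \<Rightarrow> 'b" where
  "rexp_sem I e = trace (rexp_out I) rexp_der e"

end

theory Submission
  imports Defs
begin


lemma subst_subst: "subst_trm \<sigma> (subst_trm \<tau> t) = subst_trm (\<lambda>v. subst_trm \<sigma> (\<tau> v)) t"
  by (induction t) auto

lemma wf_subst: "wf_trm ar t \<Longrightarrow> (\<forall>v. wf_trm ar (\<sigma> v)) \<Longrightarrow> wf_trm ar (subst_trm \<sigma> t)"
  by (induction t) auto

lemma eval_subst: "eval_trm I \<rho> (subst_trm \<sigma> t) = eval_trm I (\<lambda>v. eval_trm I \<rho> (\<sigma> v)) t"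
  by (induction t) (simp_all add: comp_def cong: map_cong)

lemma subst_cong: "(\<forall>v\<in>vars_trm t. \<sigma> v = \<sigma>' v) \<Longrightarrow> subst_trm \<sigma> t = subst_trm \<sigma>' t"
  by (induction t) auto

lemma eqv_sound: assumes "is_T_algebra E I"
  shows "eqv ar E s t \<Longrightarrow> eval_trm I \<rho> s = eval_trm I \<rho> t"
proof (induction rule: eqv.induct)
  case (eqv_cong ss ts f) then show ?case by (auto intro!: nth_equalityI arg_cong[where f="I f"])
next
  case (eqv_inst l r \<sigma>) then show ?case using assms by (auto simp: eval_subst is_T_algebra_def)
qed auto

lemma eqv_subst: assumes "\<forall>v. wf_trm ar (\<sigma> v)"
  shows "eqv ar E s t \<Longrightarrow> eqv ar E (subst_trm \<sigma> s) (subst_trm \<sigma> t)"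
proof (induction rule: eqv.induct)
  case (eqv_cong ss ts f) then show ?case by (auto intro!: eqv.eqv_cong)
next
  case (eqv_inst l r \<tau>)
  have "eqv ar E (subst_trm (\<lambda>v. subst_trm \<sigma> (\<tau> v)) l) (subst_trm (\<lambda>v. subst_trm \<sigma> (\<tau> v)) r)"
    using eqv_inst assms by (intro eqv.eqv_inst) (auto intro: wf_subst)
  then show ?case by (simp add: subst_subst)
next
  case (eqv_refl t) show ?case by (rule eqv.eqv_refl)
next
  case (eqv_sym s t) then show ?case by (metis eqv.eqv_sym)
next
  case (eqv_trans s t u) then show ?case by (metis eqv.eqv_trans)
qed

lemma tclass_eq: "eqv ar E s t \<Longrightarrow> tclass ar E X s = tclass ar E X t"
proof -
  assume st: "eqv ar E s t"
  have "eqv ar E t s" using st by (rule eqv_sym)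
  then show ?thesis unfolding tclass_def using eqv_trans[OF st] eqv_trans[OF \<open>eqv ar E t s\<close>]
    by (intro Collect_cong) blast
qed

lemma rep_in: "wf_trm ar t \<Longrightarrow> vars_trm t \<subseteq> X \<Longrightarrow> rep (tclass ar E X t) \<in> tclass ar E X t"
  unfolding rep_def by (rule someI[of _ t]) (auto simp: tclass_def intro: eqv_refl)

lemma TSet_rep: "c \<in> TSet ar E X \<Longrightarrow> rep c \<in> c \<and> wf_trm ar (rep c) \<and> vars_trm (rep c) \<subseteq> X"
proof -
  assume "c \<in> TSet ar E X"
  then obtain t where t: "wf_trm ar t" "vars_trm t \<subseteq> X" "c = tclass ar E X t" by (auto simp: TSet_def)
  have "rep c \<in> c" using rep_in[OF t(1,2)] t(3) by simp
  then show ?thesis using t(3) by (simp add: tclass_def)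
qed

lemma tclass_rep: "c \<in> TSet ar E X \<Longrightarrow> tclass ar E X (rep c) = c"
proof -
  assume c: "c \<in> TSet ar E X"
  then obtain t where t: "c = tclass ar E X t" by (auto simp: TSet_def)
  with TSet_rep[OF c] have "eqv ar E t (rep c)" by (simp add: tclass_def)
  then show ?thesis using t tclass_eq by metis
qed

lemma aut_out_class: "is_T_algebra E I \<Longrightarrow> wf_trm ar t \<Longrightarrow> vars_trm t \<subseteq> X
   \<Longrightarrow> aut_out I om (tclass ar E X t) = eval_trm I om t"
proof -
  assume alg: "is_T_algebra E I" and t: "wf_trm ar t" "vars_trm t \<subseteq> X"
  have "rep (tclass ar E X t) \<in> tclass ar E X t" by (rule rep_in[OF t])
  then have "eqv ar E t (rep (tclass ar E X t))" by (simp add: tclass_def)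
  from eqv_sound[OF alg this] show ?thesis unfolding aut_out_def by simp
qed

lemma aut_der_class: assumes "is_T_automaton ar E X tm" "wf_trm ar t" "vars_trm t \<subseteq> X"
  shows "aut_der ar E X tm a (tclass ar E X t) = tclass ar E X (subst_trm (\<lambda>z. rep (tm a z)) t)"
proof -
  define r where "r = rep (tclass ar E X t)"
  have r: "eqv ar E t r" "vars_trm r \<subseteq> X" using rep_in[OF assms(2,3), of E] unfolding r_def tclass_def by auto
  define \<sigma> where "\<sigma> = (\<lambda>z. if z \<in> X then rep (tm a z) else Var z)"
  have wf: "\<forall>v. wf_trm ar (\<sigma> v)"
  proof
    fix v show "wf_trm ar (\<sigma> v)"
      using assms(1) TSet_rep[of "tm a v" ar E X] unfolding \<sigma>_def is_T_automaton_def by auto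
  qed
  have "eqv ar E (subst_trm \<sigma> t) (subst_trm \<sigma> r)" by (rule eqv_subst[OF wf r(1)])
  moreover have "subst_trm \<sigma> t = subst_trm (\<lambda>z. rep (tm a z)) t"
    using assms(3) by (intro subst_cong) (auto simp: \<sigma>_def)
  moreover have "subst_trm \<sigma> r = subst_trm (\<lambda>z. rep (tm a z)) r"
    using r(2) by (intro subst_cong) (auto simp: \<sigma>_def)
  ultimately show ?thesis unfolding aut_der_def r_def[symmetric] by (metis tclass_eq eqv_sym)
qed

lemma trace_sim:
  assumes out: "\<And>e. D e \<Longrightarrow> out2 (g e) = out1 e"
      and der: "\<And>e a. D e \<Longrightarrow> D (der1 a e) \<and> g (der1 a e) = der2 a (g e)"
      and "D e"
  shows "trace out1 der1 e = trace out2 der2 (g e)"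
proof -
  have *: "\<forall>e. D e \<longrightarrow> D (foldl (\<lambda>c a. der1 a c) e w) \<and> g (foldl (\<lambda>c a. der1 a c) e w) = foldl (\<lambda>c a. der2 a c) (g e) w" for w
  proof (induction w)
    case (Cons a w) then show ?case using der by (metis foldl_Cons)
  qed simp
  show ?thesis unfolding trace_def
  proof (rule ext)
    fix w
    have "D (foldl (\<lambda>c a. der1 a c) e w)" "g (foldl (\<lambda>c a. der1 a c) e w) = foldl (\<lambda>c a. der2 a c) (g e) w"
      using *[of w] \<open>D e\<close> by auto
    then show "out1 (foldl (\<lambda>c a. der1 a c) e w) = out2 (foldl (\<lambda>c a. der2 a c) (g e) w)"
      using out by metis
  qed
qed



primrec psubst :: "(nat \<Rightarrow> ('f,'a,'b) rexp) \<Rightarrow> nat set \<Rightarrow> ('f,'a,'b) rexp \<Rightarrow> ('f,'a,'b) rexp" where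
  "psubst \<theta> D (RVar n) = (if n \<in> D then \<theta> n else RVar n)"
| "psubst \<theta> D (RMu n br \<beta>) = RMu n (\<lambda>a. psubst \<theta> (D - {n}) (br a)) \<beta>"
| "psubst \<theta> D (RApp f es) = RApp f (map (psubst \<theta> D) es)"

lemma fv_psubst: "\<forall>v. fv_rexp (\<theta> v) = {} \<Longrightarrow> fv_rexp (psubst \<theta> D e) = fv_rexp e - D"
  by (induction e arbitrary: D) auto

lemma subst_nofv: "x \<notin> fv_rexp e \<Longrightarrow> subst_rexp x g e = e"
proof (induction e)
  case (RMu n br \<beta>) then show ?case by (auto intro!: ext)
next
  case (RApp f es) then show ?case by (auto intro!: map_idI)
qed auto

lemma psubst_nofv: "fv_rexp e \<inter> D = {} \<Longrightarrow> psubst \<theta> D e = e"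
proof (induction e arbitrary: D)
  case (RMu n br \<beta>)
  have "psubst \<theta> (D - {n}) (br a) = br a" for a using RMu.prems by (intro RMu.IH) auto
  then show ?case by simp
next
  case (RApp f es) then show ?case by (auto intro!: map_idI)
qed auto

lemma psubst_cong: "\<forall>v\<in>D. \<theta> v = \<theta>' v \<Longrightarrow> psubst \<theta> D e = psubst \<theta>' D e"
  by (induction e arbitrary: D) auto

lemma subst_psubst:
  assumes "\<forall>v. fv_rexp (\<theta> v) = {}" "fv_rexp g = {}"
  shows "x \<notin> D \<Longrightarrow> subst_rexp x g (psubst \<theta> D e) = psubst (\<theta>(x:=g)) (insert x D) e"
proof (induction e arbitrary: D)
  case (RVar n) then show ?case using assms by (auto simp: subst_nofv)
next
  case (RMu n br \<beta>)
  show ?case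
  proof (cases "n = x")
    case True
    have d: "insert x D - {x} = D - {x}" by auto
    have eq: "(\<lambda>a. psubst \<theta> (D - {x}) (br a)) = (\<lambda>a. psubst (\<theta>(x:=g)) (insert x D - {x}) (br a))"
      unfolding d using RMu.prems by (intro ext psubst_cong) auto
    show ?thesis using True by (simp only: psubst.simps subst_rexp.simps if_True simp_thms eq)
  next
    case False
    have "insert x D - {n} = insert x (D - {n})" using False by auto
    then show ?thesis using False RMu by simp
  qed
next
  case (RApp f es) then show ?case by auto
qed

primrec cls :: "('f,'a,'b) rexp \<Rightarrow> (nat \<Rightarrow> ('f,'a,'b) rexp) \<Rightarrow> ('f,'a,'b) rexp set" where
  "cls (RVar n) \<theta> = {}"
| "cls (RMu n br \<beta>) \<theta> = insert (psubst \<theta> UNIV (RMu n br \<beta>))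
      (\<Union>a. cls (br a) (\<theta>(n := psubst \<theta> UNIV (RMu n br \<beta>))))"
| "cls (RApp f es) \<theta> = \<Union> (set (map (\<lambda>e. cls e \<theta>) es))"

lemma cls_mu: "\<gamma> \<in> cls e \<theta> \<Longrightarrow> \<exists>n br \<beta>. \<gamma> = RMu n br \<beta>"
proof (induction e arbitrary: \<theta>)
  case (RMu n br \<beta>)
  show ?case
  proof (cases "\<gamma> = psubst \<theta> UNIV (RMu n br \<beta>)")
    case True then show ?thesis by simp
  next
    case False
    then obtain a where "\<gamma> \<in> cls (br a) (\<theta>(n := psubst \<theta> UNIV (RMu n br \<beta>)))" using RMu.prems by auto
    then show ?thesis by (rule RMu.IH[OF rangeI])
  qed
qed auto

lemma cls_finite: "finite (cls (e::('f,'a::finite,'b) rexp) \<theta>)"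
  by (induction e arbitrary: \<theta>) auto

inductive treeS :: "('f \<Rightarrow> nat) \<Rightarrow> ('f,'a,'b) rexp set \<Rightarrow> ('f,'a,'b) rexp \<Rightarrow> bool" for ar S where
  leaf: "\<gamma> \<in> S \<Longrightarrow> treeS ar S \<gamma>"
| node: "length es = ar f \<Longrightarrow> \<forall>e\<in>set es. treeS ar S e \<Longrightarrow> treeS ar S (RApp f es)"

lemma struct1:
  assumes "\<forall>v. fv_rexp (\<theta> v) = {}" "cls \<delta> \<theta> \<subseteq> S" "\<forall>m\<in>fv_rexp \<delta>. \<theta> m \<in> S" "wf_rexp ar B0 \<delta>"
  shows "treeS ar S (psubst \<theta> UNIV \<delta>) \<and> (\<forall>\<gamma>\<in>cls \<delta> \<theta>. \<forall>a. treeS ar S (rexp_der a \<gamma>))"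
  using assms
proof (induction \<delta> arbitrary: \<theta>)
  case (RVar n) then show ?case by (auto intro: treeS.intros)
next
  case (RApp f es)
  have "\<forall>e\<in>set es. treeS ar S (psubst \<theta> UNIV e) \<and> (\<forall>\<gamma>\<in>cls e \<theta>. \<forall>a. treeS ar S (rexp_der a \<gamma>))"
  proof
    fix e assume e: "e \<in> set es"
    show "treeS ar S (psubst \<theta> UNIV e) \<and> (\<forall>\<gamma>\<in>cls e \<theta>. \<forall>a. treeS ar S (rexp_der a \<gamma>))"
      apply (rule RApp.IH[OF e])
      using RApp.prems e by (auto simp: list_all_iff)
  qed
  then show ?case using RApp.prems by (auto intro!: treeS.node)
next
  case (RMu n br \<beta>)
  define \<gamma> where "\<gamma> = psubst \<theta> UNIV (RMu n br \<beta>)"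
  define \<theta>' where "\<theta>' = \<theta>(n := \<gamma>)"
  define br' where "br' = (\<lambda>a. psubst \<theta> (UNIV - {n}) (br a))"
  have gdef: "\<gamma> = RMu n br' \<beta>" by (simp add: \<gamma>_def br'_def)
  have g_cl: "fv_rexp \<gamma> = {}" unfolding \<gamma>_def
    using fv_psubst[OF RMu.prems(1), of UNIV "RMu n br \<beta>"] by (simp only: Diff_UNIV)
  have th': "\<forall>v. fv_rexp (\<theta>' v) = {}" using RMu.prems(1) g_cl by (simp add: \<theta>'_def)
  have clsR: "cls (RMu n br \<beta>) \<theta> = insert \<gamma> (\<Union>a. cls (br a) \<theta>')" by (simp add: \<gamma>_def \<theta>'_def)
  have "\<gamma> \<in> cls (RMu n br \<beta>) \<theta>" unfolding clsR by simp
  then have gS: "\<gamma> \<in> S" using RMu.prems(2) by blast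
  have IH: "treeS ar S (psubst \<theta>' UNIV (br a)) \<and> (\<forall>\<gamma>\<in>cls (br a) \<theta>'. \<forall>b. treeS ar S (rexp_der b \<gamma>))" for a
  proof (rule RMu.IH)
    show "br a \<in> range br" by simp
    show "\<forall>v. fv_rexp (\<theta>' v) = {}" by (rule th')
    show "cls (br a) \<theta>' \<subseteq> S" using RMu.prems(2) unfolding clsR by blast
    show "\<forall>m\<in>fv_rexp (br a). \<theta>' m \<in> S" using RMu.prems(3) gS unfolding \<theta>'_def by auto
    show "wf_rexp ar B0 (br a)" using RMu.prems(4) by simp
  qed
  have der: "rexp_der a \<gamma> = psubst \<theta>' UNIV (br a)" for a
  proof -
    have "rexp_der a \<gamma> = subst_rexp n \<gamma> (br' a)" unfolding gdef by simp
    also have "\<dots> = psubst \<theta>' UNIV (br a)"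
      unfolding br'_def \<theta>'_def using subst_psubst[OF RMu.prems(1) g_cl, of n "UNIV - {n}" "br a"] by simp
    finally show ?thesis .
  qed
  have t1: "treeS ar S (psubst \<theta> UNIV (RMu n br \<beta>))" using gS unfolding \<gamma>_def by (rule treeS.leaf)
  have t2: "\<forall>\<gamma>'\<in>cls (RMu n br \<beta>) \<theta>. \<forall>a. treeS ar S (rexp_der a \<gamma>')" unfolding clsR using IH der by auto
  show ?case using t1 t2 by blast
qed

primrec unl :: "(('f,'a,'b) rexp \<Rightarrow> nat) \<Rightarrow> ('f,'a,'b) rexp \<Rightarrow> ('f,nat) trm" where
  "unl enc (RVar n) = Var 0"
| "unl enc (RMu n br \<beta>) = Var (enc (RMu n br \<beta>))"
| "unl enc (RApp f es) = App f (map (unl enc) es)"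

lemma unl_leaf: "\<forall>\<gamma>\<in>S. \<exists>n br \<beta>. \<gamma> = RMu n br \<beta> \<Longrightarrow> \<gamma> \<in> S \<Longrightarrow> unl enc \<gamma> = Var (enc \<gamma>)"
  by auto

lemma tree_unl: assumes "\<forall>\<gamma>\<in>S. \<exists>n br \<beta>. \<gamma> = RMu n br \<beta>"
  shows "treeS ar S t \<Longrightarrow> wf_trm ar (unl enc t) \<and> vars_trm (unl enc t) \<subseteq> enc ` S"
  by (induction rule: treeS.induct) (auto simp: unl_leaf[OF assms])

lemma tree_out: assumes "\<forall>\<gamma>\<in>S. \<exists>n br \<beta>. \<gamma> = RMu n br \<beta>" "\<forall>\<gamma>\<in>S. om (enc \<gamma>) = rexp_out I \<gamma>"
  shows "treeS ar S t \<Longrightarrow> rexp_out I t = eval_trm I om (unl enc t)"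
proof (induction rule: treeS.induct)
  case (leaf \<gamma>) then show ?case using assms unl_leaf[OF assms(1)] by simp
next
  case (node es f)
  have eq: "map (rexp_out I) es = map (eval_trm I om \<circ> unl enc) es"
    by (rule map_cong[OF refl]) (use node in auto)
  show ?case by (simp only: rexp_out.simps unl.simps eval_trm.simps map_map eq)
qed

lemma tree_der: assumes "\<forall>\<gamma>\<in>S. treeS ar S (rexp_der a \<gamma>)"
  shows "treeS ar S t \<Longrightarrow> treeS ar S (rexp_der a t)"
proof (induction rule: treeS.induct)
  case (leaf \<gamma>) then show ?case using assms by simp
next
  case (node es f) then show ?case by (auto intro!: treeS.node)
qed

lemma tree_der_eqv: assumes "\<forall>\<gamma>\<in>S. \<exists>n br \<beta>. \<gamma> = RMu n br \<beta>"
    "\<forall>\<gamma>\<in>S. eqv ar E (unl enc (rexp_der a \<gamma>)) (\<rho> (enc \<gamma>))"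
  shows "treeS ar S t \<Longrightarrow> eqv ar E (unl enc (rexp_der a t)) (subst_trm \<rho> (unl enc t))"
proof (induction rule: treeS.induct)
  case (leaf \<gamma>) then show ?case using assms unl_leaf[OF assms(1)] by simp
next
  case (node es f) then show ?case by (auto intro!: eqv.eqv_cong)
qed



lemma dir1:
  fixes e :: "('f,'a::finite,'b) rexp"
  assumes alg: "is_T_algebra E I" and re: "reactive ar B0 e"
  shows "\<exists>(X :: nat set) om tm x. is_T_automaton ar E X tm \<and> x \<in> X \<and> rexp_sem I e = aut_sem ar E I X om tm x"
proof -
  define \<theta>0 :: "nat \<Rightarrow> ('f,'a,'b) rexp" where "\<theta>0 = (\<lambda>_. RApp undefined [])"
  define S where "S = cls e \<theta>0"
  have th0: "\<forall>v. fv_rexp (\<theta>0 v) = {}" by (simp add: \<theta>0_def)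
  have mu: "\<forall>\<gamma>\<in>S. \<exists>n br \<beta>. \<gamma> = RMu n br \<beta>" using cls_mu S_def by blast
  have finS: "finite S" using cls_finite S_def by simp
  have st: "treeS ar S (psubst \<theta>0 UNIV e) \<and> (\<forall>\<gamma>\<in>S. \<forall>a. treeS ar S (rexp_der a \<gamma>))"
    using struct1[OF th0, of e S ar B0] re unfolding S_def reactive_def by auto
  have te: "treeS ar S e" using st psubst_nofv[of e UNIV \<theta>0] re by (auto simp: reactive_def)
  have tder: "treeS ar S t \<Longrightarrow> treeS ar S (rexp_der a t)" for t a
    using tree_der[of S ar a t] st by blast
  obtain enc where enc: "bij_betw enc S {0..<card S}" using ex_bij_betw_finite_nat[OF finS] by blast
  define N where "N = card S"
  define X where "X = {..N}"
  define dec where "dec = inv_into S enc"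
  have encS: "enc \<gamma> < N \<and> dec (enc \<gamma>) = \<gamma>" if "\<gamma> \<in> S" for \<gamma>
    using enc that unfolding N_def dec_def
    by (auto simp: bij_betw_def inv_into_f_f)
  have decS: "dec k \<in> S" if "k < N" for k
  proof -
    have "k \<in> enc ` S" using enc that unfolding N_def bij_betw_def by auto
    then show ?thesis unfolding dec_def by (rule inv_into_into)
  qed
  have encX: "enc ` S \<subseteq> X" using encS unfolding X_def by force
  define om where "om = (\<lambda>k. if k < N then rexp_out I (dec k) else rexp_out I e)"
  define tm where "tm = (\<lambda>a k. if k < N then tclass ar E X (unl enc (rexp_der a (dec k)))
                                 else tclass ar E X (unl enc (rexp_der a e)))"
  have wfv: "wf_trm ar (unl enc t) \<and> vars_trm (unl enc t) \<subseteq> X" if "treeS ar S t" for t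
    using tree_unl[OF mu that, of enc] encX by blast
  have TS: "tclass ar E X (unl enc t) \<in> TSet ar E X" if "treeS ar S t" for t
    using wfv[OF that] by (auto simp: TSet_def)
  have aut: "is_T_automaton ar E X tm"
    unfolding is_T_automaton_def
  proof (intro conjI allI ballI)
    show "finite X" by (simp add: X_def)
  next
    fix a k assume "k \<in> X"
    show "tm a k \<in> TSet ar E X"
    proof (cases "k < N")
      case True then show ?thesis using TS[OF tder[OF treeS.leaf[OF decS[OF True]]]] by (simp add: tm_def)
    next
      case False then show ?thesis using TS[OF tder[OF te]] by (simp add: tm_def)
    qed
  qed
  have om_leaf: "\<forall>\<gamma>\<in>S. om (enc \<gamma>) = rexp_out I \<gamma>" using encS by (simp add: om_def)
  have sim: "trace (rexp_out I) rexp_der t = trace (aut_out I om) (aut_der ar E X tm) (tclass ar E X (unl enc t))"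
    if "treeS ar S t" for t
  proof (rule trace_sim[where D = "treeS ar S" and g = "\<lambda>t. tclass ar E X (unl enc t)"])
    show "treeS ar S t" by (rule that)
  next
    fix t assume t: "treeS ar S t"
    show "aut_out I om (tclass ar E X (unl enc t)) = rexp_out I t"
      using aut_out_class[OF alg, of ar "unl enc t" X om] wfv[OF t] tree_out[OF mu om_leaf t] by simp
  next
    fix t a assume t: "treeS ar S t"
    have leaves: "\<forall>\<gamma>\<in>S. eqv ar E (unl enc (rexp_der a \<gamma>)) ((\<lambda>z. rep (tm a z)) (enc \<gamma>))"
    proof
      fix \<gamma> assume g: "\<gamma> \<in> S"
      have "tm a (enc \<gamma>) = tclass ar E X (unl enc (rexp_der a \<gamma>))" using encS[OF g] by (simp add: tm_def)
      moreover have "rep (tclass ar E X (unl enc (rexp_der a \<gamma>))) \<in> tclass ar E X (unl enc (rexp_der a \<gamma>))"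
        using wfv[OF tder[OF treeS.leaf[OF g]]] rep_in by blast
      ultimately show "eqv ar E (unl enc (rexp_der a \<gamma>)) ((\<lambda>z. rep (tm a z)) (enc \<gamma>))"
        by (simp add: tclass_def)
    qed
    have "eqv ar E (unl enc (rexp_der a t)) (subst_trm (\<lambda>z. rep (tm a z)) (unl enc t))"
      by (rule tree_der_eqv[OF mu leaves t])
    then have "tclass ar E X (unl enc (rexp_der a t)) = aut_der ar E X tm a (tclass ar E X (unl enc t))"
      using aut_der_class[OF aut, of "unl enc t"] wfv[OF t] tclass_eq by metis
    then show "treeS ar S (rexp_der a t) \<and> tclass ar E X (unl enc (rexp_der a t)) = aut_der ar E X tm a (tclass ar E X (unl enc t))"
      using tder[OF t] by blast
  qed
  have NX: "N \<in> X" by (simp add: X_def)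
  have vN: "wf_trm ar (Var N :: ('f,nat) trm) \<and> vars_trm (Var N :: ('f,nat) trm) \<subseteq> X" using NX by simp
  have "rexp_sem I e = aut_sem ar E I X om tm N"
  proof (rule ext)
    fix w show "rexp_sem I e w = aut_sem ar E I X om tm N w"
    proof (cases w)
      case Nil
      then show ?thesis unfolding rexp_sem_def aut_sem_def trace_def
        using aut_out_class[OF alg, of ar "Var N" X om] vN by (simp add: om_def)
    next
      case (Cons a w')
      have "aut_der ar E X tm a (tclass ar E X (Var N)) = tclass ar E X (rep (tm a N))"
        using aut_der_class[OF aut, of "Var N" a] vN by simp
      also have "\<dots> = tm a N" using tclass_rep[OF TS[OF tder[OF te]]] by (simp add: tm_def)
      also have "\<dots> = tclass ar E X (unl enc (rexp_der a e))" by (simp add: tm_def)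
      finally have d: "aut_der ar E X tm a (tclass ar E X (Var N)) = tclass ar E X (unl enc (rexp_der a e))" .
      have "rexp_sem I e w = trace (rexp_out I) rexp_der (rexp_der a e) w'"
        unfolding rexp_sem_def trace_def Cons by simp
      also have "\<dots> = trace (aut_out I om) (aut_der ar E X tm) (tclass ar E X (unl enc (rexp_der a e))) w'"
        using sim[OF tder[OF te]] by simp
      also have "\<dots> = aut_sem ar E I X om tm N w"
        unfolding aut_sem_def trace_def Cons using d by simp
      finally show ?thesis .
    qed
  qed
  then show ?thesis using aut NX by blast
qed



primrec rsubst :: "('x \<Rightarrow> ('f,'a,'b) rexp) \<Rightarrow> ('f,'x) trm \<Rightarrow> ('f,'a,'b) rexp" where
  "rsubst l (Var z) = l z"
| "rsubst l (App f ts) = RApp f (map (rsubst l) ts)"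

lemma fv_rsubst: "fv_rexp (rsubst l t) = (\<Union>z\<in>vars_trm t. fv_rexp (l z))"
  by (induction t) auto

lemma wf_rsubst: "wf_trm ar t \<Longrightarrow> (\<forall>z\<in>vars_trm t. wf_rexp ar B0 (l z)) \<Longrightarrow> wf_rexp ar B0 (rsubst l t)"
  by (induction t) (auto simp: list_all_iff)

lemma psubst_rsubst: "psubst \<theta> D (rsubst l t) = rsubst (\<lambda>z. psubst \<theta> D (l z)) t"
  by (induction t) auto

lemma subst_Var: "\<forall>v\<in>vars_trm t. \<sigma> v = Var v \<Longrightarrow> subst_trm \<sigma> t = t"
  by (induction t) (auto intro: map_idI)

locale d2 =
  fixes ar :: "'f \<Rightarrow> nat" and E :: "('f,nat) trm rel" and I :: "'f \<Rightarrow> 'b list \<Rightarrow> 'b" and B0 :: "'b set"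
    and X :: "'x set" and om :: "'x \<Rightarrow> 'b" and tm :: "'a \<Rightarrow> 'x \<Rightarrow> ('f,'x) trm set"
    and enc :: "'x \<Rightarrow> nat" and \<beta> :: "'x \<Rightarrow> ('f,'b) trm"
  assumes alg: "is_T_algebra E I" and aut: "is_T_automaton ar E X tm" and inj: "inj_on enc X"
    and bwf: "\<And>y. wf_trm ar (\<beta> y) \<and> vars_trm (\<beta> y) \<subseteq> B0 \<and> eval_trm I id (\<beta> y) = om y"
begin

definition T where "T a y = rep (tm a y)"

lemma finX: "finite X" using aut by (simp add: is_T_automaton_def)

lemma T_wf: assumes "y \<in> X" shows "wf_trm ar (T a y) \<and> vars_trm (T a y) \<subseteq> X"
proof -
  have "tm a y \<in> TSet ar E X" using aut assms unfolding is_T_automaton_def by blast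
  from TSet_rep[OF this] show ?thesis unfolding T_def by blast
qed

primrec mk :: "nat \<Rightarrow> 'x set \<Rightarrow> 'x \<Rightarrow> ('f,'a,'b) rexp" where
  "mk 0 V y = RVar (enc y)"
| "mk (Suc n) V y = (if y \<in> V then RVar (enc y)
      else RMu (enc y) (\<lambda>a. rsubst (mk n (insert y V)) (T a y)) (\<beta> y))"

lemma card_step: "y \<in> X \<Longrightarrow> y \<notin> V \<Longrightarrow> card (X - V) = Suc (card (X - insert y V))"
proof -
  assume "y \<in> X" "y \<notin> V"
  then have eq: "X - V = insert y (X - insert y V)" by blast
  have fin: "finite (X - insert y V)" using finX by blast
  have ny: "y \<notin> X - insert y V" by blast
  show ?thesis unfolding eq by (rule card_insert_disjoint[OF fin ny])
qed

lemma fv_mk: "y \<in> X \<Longrightarrow> card (X - V) < n \<Longrightarrow> fv_rexp (mk n V y) \<subseteq> enc ` V"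
proof (induction n arbitrary: V y)
  case 0 then show ?case by simp
next
  case (Suc m)
  show ?case
  proof (cases "y \<in> V")
    case True then show ?thesis by simp
  next
    case False
    have c: "card (X - insert y V) < m" using card_step[OF Suc.prems(1) False] Suc.prems(2) by simp
    have "fv_rexp (rsubst (mk m (insert y V)) (T a y)) \<subseteq> enc ` insert y V" for a
      unfolding fv_rsubst using T_wf[OF Suc.prems(1), of a] Suc.IH c by blast
    then show ?thesis using False by auto
  qed
qed

lemma wf_mk: "y \<in> X \<Longrightarrow> wf_rexp ar B0 (mk n V y)"
proof (induction n arbitrary: V y)
  case (Suc m)
  show ?case
  proof (cases "y \<in> V")
    case True then show ?thesis by simp
  next
    case False
    have "wf_rexp ar B0 (rsubst (mk m (insert y V)) (T a y))" for a
      using T_wf[OF Suc.prems, of a] by (intro wf_rsubst) (auto intro: Suc.IH)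
    then show ?thesis using False bwf by simp
  qed
qed simp

lemma mk_unfold: "y \<in> X \<Longrightarrow> y \<notin> V \<Longrightarrow> card (X - V) < n \<Longrightarrow>
   \<exists>m. n = Suc m \<and> card (X - insert y V) < m \<and>
     mk n V y = RMu (enc y) (\<lambda>a. rsubst (mk m (insert y V)) (T a y)) (\<beta> y)"
proof -
  assume y: "y \<in> X" "y \<notin> V" and c: "card (X - V) < n"
  have cs: "card (X - V) = Suc (card (X - insert y V))" by (rule card_step[OF y])
  obtain m where m: "n = Suc m" using c by (cases n) auto
  have "card (X - insert y V) < m" using c cs m by linarith
  then show ?thesis using m y(2) by simp
qed

inductive P :: "('f,'a,'b) rexp \<Rightarrow> bool" where
  "V \<subseteq> X \<Longrightarrow> y \<in> X \<Longrightarrow> y \<notin> V \<Longrightarrow> card (X - V) < n \<Longrightarrow> \<forall>v. fv_rexp (\<theta> v) = {} \<Longrightarrow>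
   \<forall>v\<in>V. P (\<theta> (enc v)) \<and> (\<exists>br. \<theta> (enc v) = RMu (enc v) br (\<beta> v)) \<Longrightarrow>
   P (psubst \<theta> (enc ` V) (mk n V y))"

lemma P_closed: assumes "P c" shows "fv_rexp c = {}"
  using assms
proof (cases rule: P.cases)
  case (1 V y n \<theta>)
  then show ?thesis using fv_psubst[of \<theta> "enc ` V" "mk n V y"] fv_mk[of y V n] by auto
qed

lemma P_der: assumes Pc: "P c"
  shows "\<exists>y\<in>X. (\<exists>br. c = RMu (enc y) br (\<beta> y)) \<and>
     (\<forall>a. \<exists>l. rexp_der a c = rsubst l (T a y) \<and>
        (\<forall>z\<in>vars_trm (T a y). P (l z) \<and> (\<exists>br. l z = RMu (enc z) br (\<beta> z))))"
  using Pc
proof (cases rule: P.cases)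
  case (1 V y n \<theta>)
  note h = 1
  obtain m where m: "n = Suc m" "card (X - insert y V) < m"
    "mk n V y = RMu (enc y) (\<lambda>a. rsubst (mk m (insert y V)) (T a y)) (\<beta> y)"
    using mk_unfold[OF h(3,4,5)] by blast
  define D where "D = enc ` V"
  define V' where "V' = insert y V"
  define \<theta>' where "\<theta>' = \<theta>(enc y := c)"
  define br0 where "br0 = (\<lambda>a. rsubst (mk m V') (T a y))"
  have ey: "enc y \<notin> D" using inj h(2,3,4) unfolding D_def by (auto dest: inj_onD)
  have cform: "c = RMu (enc y) (\<lambda>a. psubst \<theta> D (br0 a)) (\<beta> y)"
  proof -
    have "D - {enc y} = D" using ey by auto
    then show ?thesis using h(1) m(3) unfolding D_def br0_def V'_def by simp
  qed
  have ccl: "fv_rexp c = {}" by (rule P_closed[OF Pc])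
  have th': "\<forall>v. fv_rexp (\<theta>' v) = {}" using h(6) ccl by (simp add: \<theta>'_def)
  have V'X: "V' \<subseteq> X" using h(2,3) by (simp add: V'_def)
  have props: "P (\<theta>' (enc v)) \<and> (\<exists>br. \<theta>' (enc v) = RMu (enc v) br (\<beta> v))" if v: "v \<in> V'" for v
  proof (cases "v = y")
    case True then show ?thesis using Pc cform by (auto simp: \<theta>'_def)
  next
    case False
    then have "v \<in> V" using v by (simp add: V'_def)
    moreover have "enc v \<noteq> enc y" using inj False \<open>v \<in> V\<close> h(2,3) by (auto dest: inj_onD)
    ultimately show ?thesis using h(7) by (simp add: \<theta>'_def)
  qed
  define l where "l = (\<lambda>z. psubst \<theta>' (enc ` V') (mk m V' z))"
  have der: "rexp_der a c = rsubst l (T a y)" for a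
  proof -
    have "rexp_der a c = subst_rexp (enc y) c (psubst \<theta> D (br0 a))"
      unfolding cform by simp
    also have "\<dots> = psubst \<theta>' (insert (enc y) D) (br0 a)"
      unfolding \<theta>'_def by (rule subst_psubst[OF h(6) ccl ey])
    also have "\<dots> = rsubst l (T a y)"
      unfolding br0_def l_def psubst_rsubst D_def V'_def by simp
    finally show ?thesis .
  qed
  have leaves: "P (l z) \<and> (\<exists>br. l z = RMu (enc z) br (\<beta> z))" if z: "z \<in> X" for z
  proof (cases "z \<in> V'")
    case True
    have "mk m V' z = RVar (enc z)" using True by (cases m) auto
    then have "l z = \<theta>' (enc z)" using True by (simp add: l_def)
    then show ?thesis using props[OF True] by simp
  next
    case False
    have PL: "P (l z)" unfolding l_def
      by (rule P.intros[OF V'X z False m(2)[folded V'_def] th']) (use props in blast)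
    obtain k where "mk m V' z = RMu (enc z) (\<lambda>a. rsubst (mk k (insert z V')) (T a z)) (\<beta> z)"
      using mk_unfold[OF z False m(2)[folded V'_def]] by blast
    then have "\<exists>br. l z = RMu (enc z) br (\<beta> z)" by (simp add: l_def)
    with PL show ?thesis by blast
  qed
  show ?thesis
  proof (intro bexI conjI allI)
    show "y \<in> X" by (rule h(3))
    show "\<exists>br. c = RMu (enc y) br (\<beta> y)" using cform by blast
    fix a show "\<exists>l. rexp_der a c = rsubst l (T a y) \<and>
        (\<forall>z\<in>vars_trm (T a y). P (l z) \<and> (\<exists>br. l z = RMu (enc z) br (\<beta> z)))"
      using der leaves T_wf[OF h(3), of a] by blast
  qed
qed

definition dec where "dec = inv_into X enc"

primrec unr :: "('f,'a,'b) rexp \<Rightarrow> ('f,'x) trm" where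
  "unr (RVar n) = Var (dec n)"
| "unr (RMu n br b) = Var (dec n)"
| "unr (RApp f es) = App f (map unr es)"

lemma unr_mu: "y \<in> X \<Longrightarrow> unr (RMu (enc y) br b) = Var y"
  using inj by (simp add: dec_def)

inductive tree2 :: "('f,'a,'b) rexp \<Rightarrow> bool" where
  leaf: "P c \<Longrightarrow> tree2 c"
| node: "length es = ar f \<Longrightarrow> \<forall>e\<in>set es. tree2 e \<Longrightarrow> tree2 (RApp f es)"

lemma P_leaf: assumes "P c" shows "\<exists>y\<in>X. (\<exists>br. c = RMu (enc y) br (\<beta> y)) \<and> unr c = Var y"
proof -
  from P_der[OF assms] obtain y br where "y \<in> X" "c = RMu (enc y) br (\<beta> y)" by blast
  then show ?thesis using unr_mu by auto
qed

lemma tree2_wf: "tree2 t \<Longrightarrow> wf_trm ar (unr t) \<and> vars_trm (unr t) \<subseteq> X"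
proof (induction rule: tree2.induct)
  case (leaf c)
  then obtain y where "y \<in> X" "unr c = Var y" using P_leaf by blast
  then show ?case by simp
next
  case (node es f) then show ?case by auto
qed

lemma tree2_out: "tree2 t \<Longrightarrow> rexp_out I t = eval_trm I om (unr t)"
proof (induction rule: tree2.induct)
  case (leaf c)
  then obtain y br where "y \<in> X" "c = RMu (enc y) br (\<beta> y)" "unr c = Var y" using P_leaf by blast
  then show ?case using bwf[of y] by simp
next
  case (node es f)
  have eq: "map (rexp_out I) es = map (eval_trm I om \<circ> unr) es"
    by (rule map_cong[OF refl]) (use node in auto)
  show ?case by (simp only: rexp_out.simps unr.simps eval_trm.simps map_map eq)
qed

lemma rsubst_tree: "wf_trm ar s \<Longrightarrow> \<forall>z\<in>vars_trm s. tree2 (l z) \<Longrightarrow> tree2 (rsubst l s)"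
  by (induction s) (auto intro!: tree2.node)

lemma unr_rsubst: "unr (rsubst l s) = subst_trm (\<lambda>z. unr (l z)) s"
  by (induction s) auto

lemma tree2_der: "tree2 t \<Longrightarrow> tree2 (rexp_der a t) \<and> unr (rexp_der a t) = subst_trm (\<lambda>z. T a z) (unr t)"
proof (induction rule: tree2.induct)
  case (leaf c)
  obtain y where y: "y \<in> X" "\<exists>br. c = RMu (enc y) br (\<beta> y)"
    and ex: "\<exists>l. rexp_der a c = rsubst l (T a y) \<and>
        (\<forall>z\<in>vars_trm (T a y). P (l z) \<and> (\<exists>br. l z = RMu (enc z) br (\<beta> z)))"
    using P_der[OF leaf] by blast
  obtain l where l: "rexp_der a c = rsubst l (T a y)"
    "\<forall>z\<in>vars_trm (T a y). P (l z) \<and> (\<exists>br. l z = RMu (enc z) br (\<beta> z))" using ex by blast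
  have Tw: "wf_trm ar (T a y)" "vars_trm (T a y) \<subseteq> X" using T_wf[OF y(1)] by auto
  have t: "tree2 (rexp_der a c)" unfolding l(1) using Tw(1) l(2) by (intro rsubst_tree) (auto intro: tree2.leaf)
  have "unr (rexp_der a c) = subst_trm (\<lambda>z. unr (l z)) (T a y)" unfolding l(1) by (rule unr_rsubst)
  also have "\<dots> = T a y"
  proof (rule subst_Var, rule ballI)
    fix z assume z: "z \<in> vars_trm (T a y)"
    then obtain br where "l z = RMu (enc z) br (\<beta> z)" using l(2) by blast
    then show "unr (l z) = Var z" using unr_mu z Tw(2) by auto
  qed
  also have "\<dots> = subst_trm (\<lambda>z. T a z) (unr c)" using y unr_mu by auto
  finally show ?case using t by blast
next
  case (node es f)
  have eq: "map (unr \<circ> rexp_der a) es = map (subst_trm (\<lambda>z. T a z) \<circ> unr) es"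
    by (rule map_cong[OF refl]) (use node in auto)
  have "tree2 (rexp_der a (RApp f es))" using node by (auto intro!: tree2.node)
  moreover have "unr (rexp_der a (RApp f es)) = subst_trm (\<lambda>z. T a z) (unr (RApp f es))"
    by (simp only: rexp_der.simps unr.simps subst_trm.simps map_map eq)
  ultimately show ?case by blast
qed

lemma sim2: "tree2 t \<Longrightarrow> trace (rexp_out I) rexp_der t = trace (aut_out I om) (aut_der ar E X tm) (tclass ar E X (unr t))"
proof (rule trace_sim[where D = tree2 and g = "\<lambda>t. tclass ar E X (unr t)"])
  fix t assume t: "tree2 t"
  show "aut_out I om (tclass ar E X (unr t)) = rexp_out I t"
    using aut_out_class[OF alg, of ar "unr t" X om] tree2_wf[OF t] tree2_out[OF t] by simp
next
  fix t a assume t: "tree2 t"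
  have "tclass ar E X (unr (rexp_der a t)) = aut_der ar E X tm a (tclass ar E X (unr t))"
    using aut_der_class[OF aut, of "unr t" a] tree2_wf[OF t] tree2_der[OF t, of a] by (simp add: T_def)
  then show "tree2 (rexp_der a t) \<and> tclass ar E X (unr (rexp_der a t)) = aut_der ar E X tm a (tclass ar E X (unr t))"
    using tree2_der[OF t] by blast
qed

lemma dir2_loc: assumes x: "x \<in> X"
  shows "\<exists>e :: ('f,'a,'b) rexp. reactive ar B0 e \<and> rexp_sem I e = aut_sem ar E I X om tm x"
proof -
  define \<theta>0 :: "nat \<Rightarrow> ('f,'a,'b) rexp" where "\<theta>0 = (\<lambda>_. RApp undefined [])"
  define e where "e = mk (Suc (card X)) {} x"
  have c: "card (X - {}) < Suc (card X)" by simp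
  have Pe0: "P (psubst \<theta>0 (enc ` {}) (mk (Suc (card X)) {} x))"
    by (rule P.intros[OF _ x _ c]) (auto simp: \<theta>0_def)
  have pe: "psubst \<theta>0 (enc ` {}) e = e" by (rule psubst_nofv) simp
  have Pe: "P e" using Pe0 pe by (simp only: e_def[symmetric])
  have fv: "fv_rexp e = {}" using fv_mk[OF x c] unfolding e_def by blast
  have wf: "wf_rexp ar B0 e" unfolding e_def by (rule wf_mk[OF x])
  have "e = RMu (enc x) (\<lambda>a. rsubst (mk (card X) {x}) (T a x)) (\<beta> x)"
    by (simp add: e_def)
  then have ue: "unr e = Var x" using unr_mu x by simp
  have "rexp_sem I e = aut_sem ar E I X om tm x"
    unfolding rexp_sem_def aut_sem_def using sim2[OF tree2.leaf[OF Pe]] ue by simp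
  then show ?thesis using fv wf by (auto simp: reactive_def)
qed

end

lemma dir2:
  fixes X :: "'x set" and om :: "'x \<Rightarrow> 'b" and tm :: "'a \<Rightarrow> 'x \<Rightarrow> ('f,'x) trm set"
  assumes alg: "is_T_algebra E I" and fg: "fin_generated ar I B0"
    and aut: "is_T_automaton ar E X tm" and x: "x \<in> X"
  shows "\<exists>e :: ('f,'a,'b) rexp. reactive ar B0 e \<and> rexp_sem I e = aut_sem ar E I X om tm x"
proof -
  have finX: "finite X" using aut by (simp add: is_T_automaton_def)
  obtain enc :: "'x \<Rightarrow> nat" where inj: "inj_on enc X" using finite_imp_inj_to_nat_seg[OF finX] by blast
  define \<beta> where "\<beta> = (\<lambda>y. SOME t. wf_trm ar t \<and> vars_trm t \<subseteq> B0 \<and> eval_trm I id t = om y)"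
  have bwf: "wf_trm ar (\<beta> y) \<and> vars_trm (\<beta> y) \<subseteq> B0 \<and> eval_trm I id (\<beta> y) = om y" for y
  proof -
    have "\<exists>t. wf_trm ar t \<and> vars_trm t \<subseteq> B0 \<and> eval_trm I id t = om y"
      using fg unfolding fin_generated_def by blast
    then show ?thesis unfolding \<beta>_def by (rule someI_ex)
  qed
  interpret d2 ar E I B0 X om tm enc \<beta>
    by (rule d2.intro[OF alg aut inj bwf])
  show ?thesis by (rule dir2_loc[OF x])
qed

theorem mainTheorem4:
  fixes ar :: "'f \<Rightarrow> nat" and E :: "('f,nat) trm rel"
    and I :: "'f \<Rightarrow> 'b list \<Rightarrow> 'b" and B0 :: "'b set"
  assumes "eq_theory ar E" and "is_T_algebra E I" and "fin_generated ar I B0"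
  shows "(\<forall>e :: ('f,'a::finite,'b) rexp. reactive ar B0 e \<longrightarrow>
            (\<exists>(X :: nat set) om tm x. is_T_automaton ar E X tm \<and> x \<in> X \<and>
               rexp_sem I e = aut_sem ar E I X om tm x))
       \<and> (\<forall>(X :: 'x set) (om :: 'x \<Rightarrow> 'b) (tm :: 'a \<Rightarrow> 'x \<Rightarrow> ('f,'x) trm set) x.
            is_T_automaton ar E X tm \<and> x \<in> X \<longrightarrow>
            (\<exists>e :: ('f,'a,'b) rexp. reactive ar B0 e \<and> rexp_sem I e = aut_sem ar E I X om tm x))"
proof (intro conjI allI impI)
  fix e :: "('f,'a::finite,'b) rexp" assume "reactive ar B0 e"
  then show "\<exists>(X :: nat set) om tm x. is_T_automaton ar E X tm \<and> x \<in> X \<and>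
               rexp_sem I e = aut_sem ar E I X om tm x" by (rule dir1[OF assms(2)])
next
  fix X :: "'x set" and om :: "'x \<Rightarrow> 'b" and tm :: "'a \<Rightarrow> 'x \<Rightarrow> ('f,'x) trm set" and x
  assume "is_T_automaton ar E X tm \<and> x \<in> X"
  then show "\<exists>e :: ('f,'a,'b) rexp. reactive ar B0 e \<and> rexp_sem I e = aut_sem ar E I X om tm x"
    using dir2[OF assms(2,3), of X tm x om] by simp
qed


end
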